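(* Let $x,y,z$ be elements of the matrix metabelian Lie algebra $M_{I,\Lambda}$. Then (1) if $xyx=0$ and $xyy=0$, then $xy=0$; (2) if $xy=0$, $xz=0$ and $x\neq0$, then $yz=0$.
   Context: For sets $I,\Lambda$ and a field $k$, let $R=k[x_\alpha:\alpha\in\Lambda]$ and $T$ the free $R$-module with basis $\{u_i:i\in I\}$. $M_{I,\Lambda}$ is the set of pairs $(f,u)$, $f\in R$, $u\in T$, with componentwise addition and scalar multiplication and product $(f,u)\circ(g,v)=(0,ug-vf)$. Products are left-normed: $xy=x\circ y$, $xyz=(x\circ y)\circ z$. *)

theory Defs
  imports "HOL-Library.Poly_Mapping"
begin

text \<open>R = k[x_alpha : alpha in Lambda]: polynomials in variables of type 'l,
  i.e. finitely supported maps from monomials (finitely supported exponent maps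
  'l \<Rightarrow>0 nat) to coefficients in k.\<close>
type_synonym ('l, 'k) mpoly = "('l \<Rightarrow>\<^sub>0 nat) \<Rightarrow>\<^sub>0 'k"

text \<open>T = free R-module with basis u_i (i :: 'i): finitely supported maps 'i \<Rightarrow>0 R.\<close>
type_synonym ('i, 'l, 'k) freemod = "'i \<Rightarrow>\<^sub>0 ('l, 'k) mpoly"

type_synonym ('i, 'l, 'k) metab = "('l, 'k) mpoly \<times> ('i, 'l, 'k) freemod"

definition mscale :: "('i, 'l, 'k::field) freemod \<Rightarrow> ('l, 'k) mpoly \<Rightarrow> ('i, 'l, 'k) freemod"
  where "mscale u g = Poly_Mapping.map (\<lambda>c. c * g) u"

definition mprod :: "('i, 'l, 'k::field) metab \<Rightarrow> ('i, 'l, 'k) metab \<Rightarrow> ('i, 'l, 'k) metab"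
  (infixl "\<circle>" 70)
  where "mprod a b = (0, mscale (snd a) (fst b) - mscale (snd b) (fst a))"

end

theory Submission
  imports Defs
begin

lemma lookup_mscale: "Poly_Mapping.lookup (mscale u g) k = Poly_Mapping.lookup u k * g"
  unfolding mscale_def by (simp add: Poly_Mapping.map.rep_eq when_def)

lemma mscale_minus: "mscale (u - w) a = mscale u a - mscale w a"
  by (rule poly_mapping_eqI) (simp add: lookup_mscale lookup_minus algebra_simps)

lemma mscale_mscale: "mscale (mscale u a) b = mscale u (a * b)"
  by (rule poly_mapping_eqI) (simp add: lookup_mscale algebra_simps)

lemma mscale_zero_right [simp]: "mscale u 0 = 0"
  by (rule poly_mapping_eqI) (simp add: lookup_mscale)

lemma lookup_mult_unfold:
  fixes p q :: "'a::comm_monoid_add \<Rightarrow>\<^sub>0 'b::comm_semiring_0"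
  shows "Poly_Mapping.lookup (p * q) k = (\<Sum>(a, b). Poly_Mapping.lookup p a * Poly_Mapping.lookup q b when k = a + b)"
proof -
  have "Poly_Mapping.lookup (p * q) k = prod_fun (Poly_Mapping.lookup p) (Poly_Mapping.lookup q) k"
    by (simp add: times_poly_mapping.rep_eq)
  also have "\<dots> = (\<Sum>(a, b). Poly_Mapping.lookup p a * Poly_Mapping.lookup q b when k = a + b)"
    by (rule prod_fun_unfold_prod) (simp_all add: finite_keys[unfolded keys.rep_eq])
  finally show ?thesis .
qed

lemma mpoly_no_zd:
  fixes p q :: "('l, 'k::field) mpoly"
  assumes p: "p \<noteq> 0" and q: "q \<noteq> 0"
  shows "p * q \<noteq> 0"
proof -
  define F where "F = Poly_Mapping.keys p"
  define G where "G = Poly_Mapping.keys q"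
  have fF: "finite F" "F \<noteq> {}" using p by (auto simp: F_def)
  have fG: "finite G" "G \<noteq> {}" using q by (auto simp: G_def)
  define V where "V = \<Union> (Poly_Mapping.keys ` (F \<union> G))"
  have fV: "finite V" using fF fG by (auto simp: V_def)
  obtain h :: "'l \<Rightarrow> nat" and n where h: "h ` V = {i. i < n}" "inj_on h V"
    using finite_imp_inj_to_nat_seg[OF fV] by blast
  define g where "g = inv_into V h"
  define \<phi> :: "('l \<Rightarrow>\<^sub>0 nat) \<Rightarrow> (nat \<Rightarrow>\<^sub>0 nat)" where
    "\<phi> m = Abs_poly_mapping (\<lambda>j. if j \<in> h ` V then Poly_Mapping.lookup m (g j) else 0)" for m
  have fin: "finite {j. (if j \<in> h ` V then Poly_Mapping.lookup m (g j) else 0) \<noteq> 0}" for m :: "'l \<Rightarrow>\<^sub>0 nat"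
    by (rule finite_subset[of _ "h ` V"]) (use fV in auto)
  have lphi: "Poly_Mapping.lookup (\<phi> m) j = (if j \<in> h ` V then Poly_Mapping.lookup m (g j) else 0)" for m j
    unfolding \<phi>_def using fin[of m] by simp
  have add: "\<phi> (m1 + m2) = \<phi> m1 + \<phi> m2" for m1 m2
    by (rule poly_mapping_eqI) (simp add: lphi lookup_add)
  have inj: "inj_on \<phi> (F \<union> G)"
  proof
    fix m1 m2 assume m: "m1 \<in> F \<union> G" "m2 \<in> F \<union> G" "\<phi> m1 = \<phi> m2"
    show "m1 = m2"
    proof (rule poly_mapping_eqI)
      fix v
      show "Poly_Mapping.lookup m1 v = Poly_Mapping.lookup m2 v"
      proof (cases "v \<in> V")
        case True
        have "Poly_Mapping.lookup (\<phi> m1) (h v) = Poly_Mapping.lookup (\<phi> m2) (h v)" using m by simp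
        moreover have "g (h v) = v" using True h(2) by (simp add: g_def)
        ultimately show ?thesis using True by (simp add: lphi)
      next
        case False
        then have "v \<notin> Poly_Mapping.keys m1" "v \<notin> Poly_Mapping.keys m2" using m(1,2) by (auto simp: V_def)
        then show ?thesis by (simp add: in_keys_iff)
      qed
    qed
  qed
  obtain a where a: "a \<in> F" "\<phi> a = Max (\<phi> ` F)"
  proof -
    have "Max (\<phi> ` F) \<in> \<phi> ` F" using fF by (intro Max_in) auto
    then show ?thesis using that by auto
  qed
  obtain b where b: "b \<in> G" "\<phi> b = Max (\<phi> ` G)"
  proof -
    have "Max (\<phi> ` G) \<in> \<phi> ` G" using fG by (intro Max_in) auto
    then show ?thesis using that by auto
  qed
  have aM: "\<phi> a' \<le> \<phi> a" if "a' \<in> F" for a' using a fF that by simp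
  have bM: "\<phi> b' \<le> \<phi> b" if "b' \<in> G" for b' using b fG that by simp
  have key: "a' = a \<and> b' = b" if "a' \<in> F" "b' \<in> G" "a + b = a' + b'" for a' b'
  proof -
    have e: "\<phi> a + \<phi> b = \<phi> a' + \<phi> b'" using that(3) add by metis
    have "\<phi> a' = \<phi> a"
    proof (rule ccontr)
      assume "\<phi> a' \<noteq> \<phi> a"
      then have "\<phi> a' < \<phi> a" using aM[OF that(1)] by simp
      then have "\<phi> a' + \<phi> b' < \<phi> a + \<phi> b" using bM[OF that(2)] by (rule add_less_le_mono)
      then show False using e by simp
    qed
    moreover have "\<phi> b' = \<phi> b" using e calculation by simp
    ultimately show ?thesis using inj that a(1) b(1) by (meson UnI1 UnI2 inj_onD)
  qed
  have "Poly_Mapping.lookup (p * q) (a + b) = (\<Sum>(x, y). Poly_Mapping.lookup p x * Poly_Mapping.lookup q y when a + b = x + y)"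
    by (rule lookup_mult_unfold)
  also have "\<dots> = (\<Sum>ab. (case ab of (x, y) \<Rightarrow> Poly_Mapping.lookup p x * Poly_Mapping.lookup q y) when (a, b) = ab)"
  proof (rule Sum_any.cong)
    fix ab :: "('l \<Rightarrow>\<^sub>0 nat) \<times> ('l \<Rightarrow>\<^sub>0 nat)"
    obtain x y where [simp]: "ab = (x, y)" by (cases ab)
    show "(case ab of (x, y) \<Rightarrow> Poly_Mapping.lookup p x * Poly_Mapping.lookup q y when a + b = x + y) =
          ((case ab of (x, y) \<Rightarrow> Poly_Mapping.lookup p x * Poly_Mapping.lookup q y) when (a, b) = ab)"
    proof (cases "x \<in> F \<and> y \<in> G")
      case True
      then show ?thesis using key[of x y] by (auto simp: when_def)
    next
      case False
      then have "Poly_Mapping.lookup p x * Poly_Mapping.lookup q y = 0" by (auto simp: F_def G_def in_keys_iff)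
      then show ?thesis by (simp add: when_def)
    qed
  qed
  also have "\<dots> = Poly_Mapping.lookup p a * Poly_Mapping.lookup q b" by simp
  also have "\<dots> \<noteq> 0" using a(1) b(1) by (simp add: F_def G_def in_keys_iff)
  finally show ?thesis by auto
qed

lemma mscale_eq_zero1:
  fixes u :: "('i, 'l, 'k::field) freemod"
  assumes "mscale u f = 0" "f \<noteq> 0" shows "u = 0"
proof (rule poly_mapping_eqI)
  fix k
  have "Poly_Mapping.lookup u k * f = 0" using assms(1) by (metis lookup_mscale lookup_zero)
  then show "Poly_Mapping.lookup u k = Poly_Mapping.lookup 0 k" using assms(2) mpoly_no_zd by fastforce
qed

lemma mscale_eq_zero2:
  fixes u :: "('i, 'l, 'k::field) freemod"
  assumes "mscale u f = 0" "u \<noteq> 0" shows "f = 0"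
proof -
  obtain k where "Poly_Mapping.lookup u k \<noteq> 0" using assms(2) by (metis poly_mapping_eqI lookup_zero)
  moreover have "Poly_Mapping.lookup u k * f = 0" using assms(1) by (metis lookup_mscale lookup_zero)
  ultimately show ?thesis using mpoly_no_zd by blast
qed

theorem lemma3p1p4:
  fixes x y z :: "('i, 'l, 'k::field) metab"
  shows "(x \<circle> y \<circle> x = (0, 0) \<and> x \<circle> y \<circle> y = (0, 0) \<longrightarrow> x \<circle> y = (0, 0))
       \<and> (x \<circle> y = (0, 0) \<and> x \<circle> z = (0, 0) \<and> x \<noteq> (0, 0) \<longrightarrow> y \<circle> z = (0, 0))"
proof -
  obtain f u where x: "x = (f, u)" by (cases x)
  obtain g v where y: "y = (g, v)" by (cases y)
  obtain h t where z: "z = (h, t)" by (cases z)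
  have P1: "x \<circle> y = (0, 0)" if "x \<circle> y \<circle> x = (0, 0)" "x \<circle> y \<circle> y = (0, 0)"
  proof -
    define w where "w = mscale u g - mscale v f"
    have xy: "x \<circle> y = (0, w)" by (simp add: x y mprod_def w_def)
    have 1: "mscale w f = 0" using that(1) by (simp add: xy x y mprod_def w_def)
    have 2: "mscale w g = 0" using that(2) by (simp add: xy x y mprod_def w_def)
    have "w = 0"
    proof (cases "f = 0")
      case False then show ?thesis using 1 mscale_eq_zero1 by blast
    next
      case True
      show ?thesis
      proof (cases "g = 0")
        case False then show ?thesis using 2 mscale_eq_zero1 by blast
      next
        case g: True
        show ?thesis using True g by (simp add: w_def)
      qed
    qed
    then show ?thesis using xy by simp
  qed
  have P2: "y \<circle> z = (0, 0)" if "x \<circle> y = (0, 0)" "x \<circle> z = (0, 0)" "x \<noteq> (0, 0)"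
  proof -
    have e1: "mscale u g = mscale v f" using that(1) by (simp add: x y mprod_def)
    have e2: "mscale u h = mscale t f" using that(2) by (simp add: x z mprod_def)
    have "mscale v h - mscale t g = 0"
    proof (cases "f = 0")
      case False
      have "mscale (mscale v h - mscale t g) f = mscale (mscale v f) h - mscale (mscale t f) g"
        by (simp add: mscale_minus mscale_mscale mult.commute)
      also have "\<dots> = mscale (mscale u g) h - mscale (mscale u h) g" using e1 e2 by simp
      also have "\<dots> = 0" by (simp add: mscale_mscale mult.commute)
      finally show ?thesis using False mscale_eq_zero1 by blast
    next
      case True
      then have "u \<noteq> 0" using that(3) x by simp
      moreover have "mscale u g = 0" "mscale u h = 0" using e1 e2 True by simp_all
      ultimately have "g = 0" "h = 0" using mscale_eq_zero2 by blast+
      then show ?thesis by simp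
    qed
    then show ?thesis by (simp add: y z mprod_def)
  qed
  show ?thesis using P1 P2 by blast
qed

end
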